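(* Let $\sigma>0,\lambda>0,\rho>0$ satisfy $\rho^{-2}\sigma<1$ and $\rho\le\lambda-2\rho^{-1}\sigma(1-\rho^{-2}\sigma)^{-1}$. Let $\Omega=\begin{bmatrix}\Omega^{11}&\Omega^{12}\\\Omega^{21}&\Omega^{22}\end{bmatrix}\in\mathbb{R}^{2n\times2n}$ be symmetric (so $(\Omega^{12})^T=\Omega^{21}$) with $\Omega^{11}+\Omega^{22}>0$, and suppose $$\Omega^{12}\Omega^{21}\le\sigma I,\quad\Omega^{21}\Omega^{12}\le\sigma I,\quad\Omega^{11}+\Omega^{22}\ge\lambda I.$$ Define $\Omega_1=\Omega$ and $\Omega_{k+1}=\Omega_k\circledast\Omega_k$. Then $\Omega^{11}_k+\Omega^{22}_k\ge\rho I$ for all $k\in\mathbb{Z}_{>0}$, and there is a block diagonal matrix $\Omega_\infty=\operatorname{diag}(\Omega^{11}_\infty,\Omega^{22}_\infty)$ with $\Omega^{11}_\infty+\Omega^{22}_\infty\ge\rho I$ such that $\Omega_k\to\Omega_\infty$ as $k\to\infty$.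
   Context: For symmetric $\Omega_1,\Omega_2\in\mathbb{R}^{2n\times2n}$ partitioned into $n\times n$ blocks $\Omega_j^{ab}$, with $\Omega_1^{22}+\Omega_2^{11}>0$, define $$\Omega_1\circledast\Omega_2=\begin{bmatrix}\Omega_1^{11}&0\\0&\Omega_2^{22}\end{bmatrix}-\begin{bmatrix}\Omega_1^{12}\\\Omega_2^{21}\end{bmatrix}(\Omega_1^{22}+\Omega_2^{11})^{-1}\begin{bmatrix}\Omega_1^{21}&\Omega_2^{12}\end{bmatrix}.$$ Matrix inequalities are in the positive semidefinite order. *)

theory Defs
  imports "HOL-Analysis.Analysis"
begin

text \<open>A 2n x 2n real matrix is represented with row/column index type 'n + 'n,
  where Inl i is the i-th index of the first block and Inr i of the second.\<close>

definition blk11 :: "real^('n::finite + 'n)^('n + 'n) \<Rightarrow> real^'n^'n" where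
  "blk11 M = (\<chi> i j. M $ Inl i $ Inl j)"
definition blk12 :: "real^('n::finite + 'n)^('n + 'n) \<Rightarrow> real^'n^'n" where
  "blk12 M = (\<chi> i j. M $ Inl i $ Inr j)"
definition blk21 :: "real^('n::finite + 'n)^('n + 'n) \<Rightarrow> real^'n^'n" where
  "blk21 M = (\<chi> i j. M $ Inr i $ Inl j)"
definition blk22 :: "real^('n::finite + 'n)^('n + 'n) \<Rightarrow> real^'n^'n" where
  "blk22 M = (\<chi> i j. M $ Inr i $ Inr j)"

definition blocks :: "real^'n^'n \<Rightarrow> real^'n^'n \<Rightarrow> real^'n^'n \<Rightarrow> real^'n^'n
    \<Rightarrow> real^('n::finite + 'n)^('n + 'n)" where
  "blocks A B C D = (\<chi> i j. case i of
      Inl a \<Rightarrow> (case j of Inl b \<Rightarrow> A $ a $ b | Inr b \<Rightarrow> B $ a $ b)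
    | Inr a \<Rightarrow> (case j of Inl b \<Rightarrow> C $ a $ b | Inr b \<Rightarrow> D $ a $ b))"

text \<open>Positive semidefinite order A \<le> B (B - A is PSD) and positive definiteness.\<close>
definition psd_le :: "real^'n^'n \<Rightarrow> real^'n^'n \<Rightarrow> bool" where
  "psd_le A B \<longleftrightarrow> (\<forall>x. 0 \<le> x \<bullet> ((B - A) *v x))"

definition pos_def :: "real^'n^'n \<Rightarrow> bool" where
  "pos_def A \<longleftrightarrow> (\<forall>x. x \<noteq> 0 \<longrightarrow> 0 < x \<bullet> (A *v x))"

definition star_prod :: "real^('n::finite + 'n)^('n + 'n) \<Rightarrow> real^('n + 'n)^('n + 'n)
    \<Rightarrow> real^('n + 'n)^('n + 'n)" (infixl "\<circledast>" 70) where
  "star_prod O1 O2 =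
    (let G = matrix_inv (blk22 O1 + blk11 O2) in
     blocks (blk11 O1 - blk12 O1 ** G ** blk21 O1)
            (- (blk12 O1 ** G ** blk12 O2))
            (- (blk21 O2 ** G ** blk21 O1))
            (blk22 O2 - blk21 O2 ** G ** blk12 O2))"

text \<open>Omega_seq Om k is the paper's Omega_k (meaningful for k \<ge> 1):
  Omega_1 = Om, Omega_{k+1} = Omega_k \<circledast> Omega_k.\<close>
definition Omega_seq :: "real^('n::finite + 'n)^('n + 'n) \<Rightarrow> nat \<Rightarrow> real^('n + 'n)^('n + 'n)" where
  "Omega_seq Om k = ((\<lambda>M. M \<circledast> M) ^^ (k - 1)) Om"

end

theory Submission
  imports Defs
begin

lemma blk_blocks[simp]:
  "blk11 (blocks A B C D) = A" "blk12 (blocks A B C D) = B"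
  "blk21 (blocks A B C D) = C" "blk22 (blocks A B C D) = D"
  by (simp_all add: blk11_def blk12_def blk21_def blk22_def blocks_def vec_eq_iff)

lemma neg_mv: "(- A) *v x = - (A *v (x::real^'n))"
  by (simp add: vec_eq_iff matrix_vector_mult_def sum_negf)

lemma scal_mv: "((s::real) *\<^sub>R mat 1) *v x = s *\<^sub>R (x::real^'n)"
  by (metis scaleR_matrix_vector_assoc matrix_vector_mul_lid)

lemma psd_le_iff: "psd_le A B \<longleftrightarrow> (\<forall>x. x \<bullet> (A *v x) \<le> x \<bullet> (B *v x))"
  unfolding psd_le_def by (simp add: matrix_vector_mult_diff_rdistrib inner_diff_right)

lemma inv_bound:
  fixes S :: "real^'n^'n"
  assumes m: "m > 0" and q: "\<And>x. m * norm x ^ 2 \<le> x \<bullet> (S *v x)"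
  shows "norm (matrix_inv S *v y) \<le> norm y / m"
proof -
  have inj: "\<forall>x. S *v x = 0 \<longrightarrow> x = 0"
  proof (intro allI impI)
    fix x assume "S *v x = 0"
    then have "m * norm x ^ 2 \<le> 0" using q[of x] by simp
    then show "x = 0" using m by (simp add: mult_le_0_iff)
  qed
  then obtain B where "B ** S = mat 1" using matrix_left_invertible_ker by blast
  then have "S ** B = mat 1 \<and> B ** S = mat 1" using matrix_left_right_inverse by blast
  then have "S ** matrix_inv S = mat 1 \<and> matrix_inv S ** S = mat 1"
    unfolding matrix_inv_def by (rule someI)
  then have SG: "S *v (matrix_inv S *v y) = y"
    by (simp add: matrix_vector_mul_assoc)
  define z where "z = matrix_inv S *v y"
  have "m * norm z ^ 2 \<le> z \<bullet> y" using q[of z] SG z_def by simp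
  also have "\<dots> \<le> norm z * norm y" by (rule norm_cauchy_schwarz)
  finally have h: "m * norm z ^ 2 \<le> norm z * norm y" .
  show ?thesis
  proof (cases "z = 0")
    case True then show ?thesis using m z_def by simp
  next
    case False
    then have "norm z > 0" by simp
    with h have "m * norm z \<le> norm y"
      by (simp add: power2_eq_square mult.assoc[symmetric] mult_le_cancel_right)
    then show ?thesis using m z_def by (simp add: field_simps)
  qed
qed

lemma trip:
  fixes X Y G :: "real^'n^'n"
  assumes rho: "\<rho> > 0" and c: "c \<ge> 0"
    and X: "\<And>z. norm (X *v z) \<le> c * norm z"
    and Y: "\<And>z. norm (Y *v z) \<le> c * norm z"
    and G: "\<And>z. norm (G *v z) \<le> norm z / \<rho>"
  shows "norm ((X ** G ** Y) *v x) \<le> (c^2/\<rho>) * norm x"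
proof -
  have "norm ((X ** G ** Y) *v x) = norm (X *v (G *v (Y *v x)))"
    by (simp add: matrix_vector_mul_assoc matrix_mul_assoc)
  also have "\<dots> \<le> c * norm (G *v (Y *v x))" by (rule X)
  also have "\<dots> \<le> c * (norm (Y *v x) / \<rho>)" by (rule mult_left_mono[OF G c])
  also have "\<dots> \<le> c * (c * norm x / \<rho>)"
    by (intro mult_left_mono divide_right_mono Y c) (use rho in auto)
  finally show ?thesis by (simp add: power2_eq_square field_simps)
qed

lemma lin: "(L::real) = Q - P1 - P2 \<Longrightarrow> mm \<le> Q \<Longrightarrow> P1 \<le> a \<Longrightarrow> P2 \<le> a \<Longrightarrow> E = mm - a - a \<Longrightarrow> E \<le> L"
  by linarith

lemma step:
  fixes M :: "real^('n::finite + 'n)^('n + 'n)"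
  assumes rho: "\<rho> > 0" and mr: "\<rho> \<le> m" and c: "c \<ge> 0"
    and b12: "\<And>x. norm (blk12 M *v x) \<le> c * norm x"
    and b21: "\<And>x. norm (blk21 M *v x) \<le> c * norm x"
    and sq: "\<And>x. m * norm x ^ 2 \<le> x \<bullet> ((blk11 M + blk22 M) *v x)"
  shows "norm (blk12 (M \<circledast> M) *v x) \<le> (c^2/\<rho>) * norm x"
    "norm (blk21 (M \<circledast> M) *v x) \<le> (c^2/\<rho>) * norm x"
    "norm ((blk11 (M \<circledast> M) - blk11 M) *v x) \<le> (c^2/\<rho>) * norm x"
    "norm ((blk22 (M \<circledast> M) - blk22 M) *v x) \<le> (c^2/\<rho>) * norm x"
    "(m - 2*c^2/\<rho>) * norm x ^ 2 \<le> x \<bullet> ((blk11 (M \<circledast> M) + blk22 (M \<circledast> M)) *v x)"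
proof -
  define G where "G = matrix_inv (blk22 M + blk11 M)"
  have Gb: "norm (G *v z) \<le> norm z / \<rho>" for z
  proof -
    have "norm (G *v z) \<le> norm z / m"
      unfolding G_def by (rule inv_bound) (use rho mr sq in \<open>auto simp: add.commute\<close>)
    also have "\<dots> \<le> norm z / \<rho>" using rho mr by (simp add: frac_le)
    finally show ?thesis .
  qed
  note T = trip[OF rho c _ _ Gb]
  have e: "M \<circledast> M = blocks (blk11 M - blk12 M ** G ** blk21 M)
            (- (blk12 M ** G ** blk12 M)) (- (blk21 M ** G ** blk21 M))
            (blk22 M - blk21 M ** G ** blk12 M)"
    unfolding star_prod_def G_def Let_def by simp
  show "norm (blk12 (M \<circledast> M) *v x) \<le> (c^2/\<rho>) * norm x"
    unfolding e using T[OF b12 b12, of x] by (simp add: neg_mv)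
  show "norm (blk21 (M \<circledast> M) *v x) \<le> (c^2/\<rho>) * norm x"
    unfolding e using T[OF b21 b21, of x] by (simp add: neg_mv)
  show "norm ((blk11 (M \<circledast> M) - blk11 M) *v x) \<le> (c^2/\<rho>) * norm x"
    unfolding e using T[OF b12 b21, of x] by (simp add: neg_mv)
  show "norm ((blk22 (M \<circledast> M) - blk22 M) *v x) \<le> (c^2/\<rho>) * norm x"
    unfolding e using T[OF b21 b12, of x] by (simp add: neg_mv)
  have i1: "x \<bullet> ((blk12 M ** G ** blk21 M) *v x) \<le> norm x * ((c^2/\<rho>) * norm x)"
    by (rule order_trans[OF _ mult_left_mono[OF T[OF b12 b21]]])
       (auto intro: order_trans[OF _ norm_cauchy_schwarz] simp: norm_cauchy_schwarz)
  have i2: "x \<bullet> ((blk21 M ** G ** blk12 M) *v x) \<le> norm x * ((c^2/\<rho>) * norm x)"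
    by (rule order_trans[OF _ mult_left_mono[OF T[OF b21 b12]]])
       (auto simp: norm_cauchy_schwarz)
  have eq: "x \<bullet> ((blk11 (M \<circledast> M) + blk22 (M \<circledast> M)) *v x)
      = x \<bullet> ((blk11 M + blk22 M) *v x) - x \<bullet> ((blk12 M ** G ** blk21 M) *v x)
        - x \<bullet> ((blk21 M ** G ** blk12 M) *v x)"
    unfolding e by (simp add: matrix_vector_mult_diff_rdistrib matrix_vector_mult_add_rdistrib
        inner_diff_right inner_add_right)
  show "(m - 2*c^2/\<rho>) * norm x ^ 2 \<le> x \<bullet> ((blk11 (M \<circledast> M) + blk22 (M \<circledast> M)) *v x)"
  proof -
    have k: "norm x * ((c^2/\<rho>) * norm x) = (c^2/\<rho>) * norm x ^ 2"
      by (simp add: power2_eq_square)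
    have Eq: "(m - 2*c^2/\<rho>) * norm x ^ 2 = m * norm x ^ 2 - (c^2/\<rho>) * norm x ^ 2 - (c^2/\<rho>) * norm x ^ 2"
      by (simp add: algebra_simps)
    show ?thesis by (rule lin[OF eq sq[of x] i1[unfolded k] i2[unfolded k] Eq])
  qed
qed


lemma entry_bound:
  fixes X :: "real^'n^'n"
  assumes "\<And>x. norm (X *v x) \<le> K * norm x"
  shows "\<bar>X $ a $ b\<bar> \<le> K"
proof -
  have "X $ a $ b = (X *v axis b 1) $ a"
    by (simp add: matrix_vector_mult_basis column_def)
  also have "\<bar>\<dots>\<bar> \<le> norm (X *v axis b 1)" by (rule component_le_norm_cart)
  also have "\<dots> \<le> K" using assms[of "axis b 1"] by simp
  finally show ?thesis .
qed

lemma conv_lemma: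
  fixes f g :: "nat \<Rightarrow> real"
  assumes "\<And>k. \<bar>f (Suc k) - f k\<bar> \<le> g k" "summable g"
  shows "convergent f"
proof -
  have "summable (\<lambda>k. f (Suc k) - f k)"
    by (rule summable_comparison_test'[OF assms(2)]) (use assms(1) in simp)
  then have "(\<lambda>n. \<Sum>k<n. f (Suc k) - f k) \<longlonglongrightarrow> (\<Sum>k. f (Suc k) - f k)"
    by (rule summable_LIMSEQ)
  then have "(\<lambda>n. f n - f 0) \<longlonglongrightarrow> (\<Sum>k. f (Suc k) - f k)"
    by (simp add: sum_lessThan_telescope)
  then have "(\<lambda>n. (f n - f 0) + f 0) \<longlonglongrightarrow> (\<Sum>k. f (Suc k) - f k) + f 0"
    by (intro tendsto_add tendsto_const)
  then show ?thesis by (auto simp: convergent_def)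
qed

lemma quad_cont:
  fixes A :: "nat \<Rightarrow> real^'n^'n"
  assumes "\<And>i j. (\<lambda>k. A k $ i $ j) \<longlonglongrightarrow> B $ i $ j"
  shows "(\<lambda>k. x \<bullet> (A k *v x)) \<longlonglongrightarrow> x \<bullet> (B *v x)"
  unfolding inner_vec_def matrix_vector_mult_def
  by (simp only: vec_lambda_beta) (intro tendsto_intros assms)

lemma two_pow: "2 * n \<le> (2::nat) ^ n"
proof (induction n)
  case 0 then show ?case by simp
next
  case (Suc n)
  show ?case
  proof (cases "n = 0")
    case True then show ?thesis by simp
  next
    case False
    then have "1 \<le> n" by simp
    then have "2 \<le> (2::nat) ^ n" using power_increasing[of 1 n "2::nat"] by simp
    then show ?thesis using Suc by simp
  qed
qed

theorem theorem4p2: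
  fixes \<sigma> lam \<rho> :: real and Om :: "real^('n::finite + 'n)^('n + 'n)"
  assumes "\<sigma> > 0" "lam > 0" "\<rho> > 0"
    and "\<sigma> / \<rho>^2 < 1"
    and "\<rho> \<le> lam - 2 * (\<sigma> / \<rho>) / (1 - \<sigma> / \<rho>^2)"
    and "transpose Om = Om"
    and "pos_def (blk11 Om + blk22 Om)"
    and "psd_le (blk12 Om ** blk21 Om) (\<sigma> *\<^sub>R mat 1)"
    and "psd_le (blk21 Om ** blk12 Om) (\<sigma> *\<^sub>R mat 1)"
    and "psd_le (lam *\<^sub>R mat 1) (blk11 Om + blk22 Om)"
  shows "(\<forall>k>0. psd_le (\<rho> *\<^sub>R mat 1) (blk11 (Omega_seq Om k) + blk22 (Omega_seq Om k)))
       \<and> (\<exists>Oinf. blk12 Oinf = 0 \<and> blk21 Oinf = 0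
             \<and> psd_le (\<rho> *\<^sub>R mat 1) (blk11 Oinf + blk22 Oinf)
             \<and> (\<lambda>k. Omega_seq Om k) \<longlonglongrightarrow> Oinf)"
proof -
  note sig = assms(1) and rho = assms(3)
  define F where "F = (\<lambda>M::real^('n + 'n)^('n + 'n). M \<circledast> M)"
  define W where "W k = (F ^^ k) Om" for k
  define r where "r = sqrt \<sigma> / \<rho>"
  define c where "c k = \<rho> * r ^ (2^k)" for k
  define m where "m k = lam - (\<Sum>j<k. 2 * c (Suc j))" for k
  define q where "q = \<sigma> / \<rho>^2"
  have r0: "r > 0" using sig rho by (simp add: r_def)
  have rq: "r^2 = q" using sig rho by (simp add: r_def q_def power_divide)
  have q1: "q < 1" using assms(4) q_def by simp
  have q0: "q > 0" using sig rho q_def by simp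
  have r1: "r < 1"
  proof (rule ccontr)
    assume "\<not> r < 1"
    then have "1 \<le> r^2" using one_le_power[of r 2] by simp
    then show False using rq q1 by simp
  qed
  have c0: "c k \<ge> 0" for k using rho r0 by (simp add: c_def)
  have cS: "c k ^ 2 / \<rho> = c (Suc k)" for k
    using rho by (simp add: c_def power2_eq_square power_add[symmetric] power_mult_distrib mult_2)
  have cdec: "c (Suc k) \<le> c k" for k
  proof -
    have "r^(2^Suc k) \<le> r^(2^k)" by (rule power_decreasing) (use r0 r1 in auto)
    then show ?thesis unfolding c_def using rho by (simp add: mult_left_mono)
  qed
  have mS: "m (Suc k) = m k - 2 * c k ^ 2 / \<rho>" for k
    by (simp add: m_def cS[symmetric])
  have cle: "c (Suc j) \<le> \<rho> * q ^ Suc j" for j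
  proof -
    have "r ^ (2 ^ Suc j) \<le> r ^ (2 * Suc j)"
      using two_pow[of "Suc j"] r0 r1 by (intro power_decreasing) auto
    also have "\<dots> = q ^ Suc j" by (simp only: power_mult rq)
    finally show ?thesis unfolding c_def using rho by simp
  qed
  have mge: "\<rho> \<le> m k" for k
  proof -
    have "(\<Sum>j<k. 2 * c (Suc j)) \<le> (\<Sum>j<k. 2 * (\<rho> * q ^ Suc j))"
      by (intro sum_mono) (use cle in auto)
    also have "\<dots> = 2 * \<rho> * q * (\<Sum>j<k. q ^ j)"
      by (simp add: sum_distrib_left mult_ac)
    also have "\<dots> = 2 * \<rho> * q * ((1 - q^k) / (1 - q))"
      using q1 by (simp add: sum_gp_strict)
    also have "\<dots> \<le> 2 * \<rho> * q * (1 / (1 - q))"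
      using q0 q1 rho by (intro mult_left_mono divide_right_mono) auto
    also have "\<dots> = 2 * (\<sigma> / \<rho>) / (1 - \<sigma> / \<rho>^2)"
      using rho by (simp add: q_def power2_eq_square field_simps)
    finally show ?thesis using assms(5) by (simp add: m_def)
  qed
  have W0: "W 0 = Om" by (simp add: W_def)
  have WS: "W (Suc k) = W k \<circledast> W k" for k by (simp add: W_def F_def)
  have OmT: "Om $ i $ j = Om $ j $ i" for i j
  proof -
    have "transpose Om $ i $ j = Om $ i $ j" using assms(6) by simp
    then show ?thesis by (simp add: transpose_def)
  qed
  have CT: "blk21 Om = transpose (blk12 Om)"
    unfolding vec_eq_iff blk21_def blk12_def transpose_def vec_lambda_beta using OmT by blast
  have BT: "blk12 Om = transpose (blk21 Om)"
    unfolding vec_eq_iff blk21_def blk12_def transpose_def vec_lambda_beta using OmT by blast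
  have sqb: "norm (X *v x) \<le> sqrt \<sigma> * norm x"
    if "norm (X *v x) ^ 2 \<le> \<sigma> * norm x ^ 2" for X :: "real^'n^'n" and x
  proof -
    have "norm (X *v x) = sqrt (norm (X *v x) ^ 2)" by simp
    also have "\<dots> \<le> sqrt (\<sigma> * norm x ^ 2)" by (rule real_sqrt_le_mono[OF that])
    also have "\<dots> = sqrt \<sigma> * norm x" by (simp add: real_sqrt_mult)
    finally show ?thesis .
  qed
  have base12: "norm (blk12 Om *v x) \<le> c 0 * norm x" for x
  proof -
    have "norm (blk12 Om *v x) ^ 2 = (x v* blk21 Om) \<bullet> (blk12 Om *v x)"
      unfolding power2_norm_eq_inner CT vector_transpose_matrix by (rule refl)
    also have "\<dots> = x \<bullet> ((blk21 Om ** blk12 Om) *v x)"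
      by (simp only: dot_lmul_matrix matrix_vector_mul_assoc)
    also have "\<dots> \<le> \<sigma> * norm x ^ 2"
      using assms(9) by (simp add: psd_le_iff scal_mv power2_norm_eq_inner)
    finally show ?thesis using sqb sig rho by (simp add: c_def r_def)
  qed
  have base21: "norm (blk21 Om *v x) \<le> c 0 * norm x" for x
  proof -
    have "norm (blk21 Om *v x) ^ 2 = (x v* blk12 Om) \<bullet> (blk21 Om *v x)"
      unfolding power2_norm_eq_inner BT vector_transpose_matrix by (rule refl)
    also have "\<dots> = x \<bullet> ((blk12 Om ** blk21 Om) *v x)"
      by (simp only: dot_lmul_matrix matrix_vector_mul_assoc)
    also have "\<dots> \<le> \<sigma> * norm x ^ 2"
      using assms(8) by (simp add: psd_le_iff scal_mv power2_norm_eq_inner)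
    finally show ?thesis using sqb sig rho by (simp add: c_def r_def)
  qed
  have basesq: "m 0 * norm x ^ 2 \<le> x \<bullet> ((blk11 Om + blk22 Om) *v x)" for x
    using assms(10) by (simp add: psd_le_iff scal_mv power2_norm_eq_inner m_def)
  define P where "P k \<longleftrightarrow> (\<forall>x. norm (blk12 (W k) *v x) \<le> c k * norm x)
      \<and> (\<forall>x. norm (blk21 (W k) *v x) \<le> c k * norm x)
      \<and> (\<forall>x. m k * norm x ^ 2 \<le> x \<bullet> ((blk11 (W k) + blk22 (W k)) *v x))" for k
  have PK: "P k" for k
  proof (induction k)
    case 0 then show ?case using base12 base21 basesq by (simp add: P_def W0)
  next
    case (Suc k)
    then have h: "\<And>x. norm (blk12 (W k) *v x) \<le> c k * norm x"
      "\<And>x. norm (blk21 (W k) *v x) \<le> c k * norm x"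
      "\<And>x. m k * norm x ^ 2 \<le> x \<bullet> ((blk11 (W k) + blk22 (W k)) *v x)"
      unfolding P_def by auto
    note st = step[OF rho mge c0 h]
    show ?case unfolding P_def WS mS using st(1,2,5) by (simp add: cS)
  qed
  have D11: "norm ((blk11 (W (Suc k)) - blk11 (W k)) *v x) \<le> c (Suc k) * norm x" for k x
  proof -
    have h: "\<And>x. norm (blk12 (W k) *v x) \<le> c k * norm x"
      "\<And>x. norm (blk21 (W k) *v x) \<le> c k * norm x"
      "\<And>x. m k * norm x ^ 2 \<le> x \<bullet> ((blk11 (W k) + blk22 (W k)) *v x)"
      using PK[of k] unfolding P_def by auto
    show ?thesis unfolding WS using step(3)[OF rho mge c0 h] by (simp add: cS)
  qed
  have D22: "norm ((blk22 (W (Suc k)) - blk22 (W k)) *v x) \<le> c (Suc k) * norm x" for k x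
  proof -
    have h: "\<And>x. norm (blk12 (W k) *v x) \<le> c k * norm x"
      "\<And>x. norm (blk21 (W k) *v x) \<le> c k * norm x"
      "\<And>x. m k * norm x ^ 2 \<le> x \<bullet> ((blk11 (W k) + blk22 (W k)) *v x)"
      using PK[of k] unfolding P_def by auto
    show ?thesis unfolding WS using step(4)[OF rho mge c0 h] by (simp add: cS)
  qed
  have E12: "\<bar>W k $ Inl a $ Inr b\<bar> \<le> c k" for k a b
  proof -
    have "\<bar>blk12 (W k) $ a $ b\<bar> \<le> c k"
      by (rule entry_bound) (use PK[of k] in \<open>auto simp: P_def\<close>)
    then show ?thesis by (simp add: blk12_def)
  qed
  have E21: "\<bar>W k $ Inr a $ Inl b\<bar> \<le> c k" for k a b
  proof -
    have "\<bar>blk21 (W k) $ a $ b\<bar> \<le> c k"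
      by (rule entry_bound) (use PK[of k] in \<open>auto simp: P_def\<close>)
    then show ?thesis by (simp add: blk21_def)
  qed
  have E11: "\<bar>W (Suc k) $ Inl a $ Inl b - W k $ Inl a $ Inl b\<bar> \<le> c k" for k a b
  proof -
    have "\<bar>(blk11 (W (Suc k)) - blk11 (W k)) $ a $ b\<bar> \<le> c (Suc k)"
      by (rule entry_bound) (rule D11)
    then show ?thesis using cdec[of k] by (simp add: blk11_def)
  qed
  have E22: "\<bar>W (Suc k) $ Inr a $ Inr b - W k $ Inr a $ Inr b\<bar> \<le> c k" for k a b
  proof -
    have "\<bar>(blk22 (W (Suc k)) - blk22 (W k)) $ a $ b\<bar> \<le> c (Suc k)"
      by (rule entry_bound) (rule D22)
    then show ?thesis using cdec[of k] by (simp add: blk22_def)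
  qed
  have Ediff: "\<bar>W (Suc k) $ i $ j - W k $ i $ j\<bar> \<le> 2 * c k" for k i j
  proof (cases i; cases j)
    fix a b assume "i = Inl a" "j = Inl b"
    then show ?thesis using E11[of k a b] c0[of k] by simp
  next
    fix a b assume "i = Inl a" "j = Inr b"
    then show ?thesis using E12[of "Suc k" a b] E12[of k a b] cdec[of k] by simp
  next
    fix a b assume "i = Inr a" "j = Inl b"
    then show ?thesis using E21[of "Suc k" a b] E21[of k a b] cdec[of k] by simp
  next
    fix a b assume "i = Inr a" "j = Inr b"
    then show ?thesis using E22[of k a b] c0[of k] by simp
  qed
  have csum: "summable c"
  proof (rule summable_comparison_test'[where g = "\<lambda>k. \<rho> * r ^ k"])
    show "summable (\<lambda>k. \<rho> * r ^ k)"
      using r0 r1 by (intro summable_mult summable_geometric) simp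
    fix k :: nat
    have "r ^ (2^k) \<le> r ^ k"
      using r0 r1 by (intro power_decreasing) (auto intro: less_imp_le_nat[OF less_exp])
    then show "norm (c k) \<le> \<rho> * r ^ k" using c0[of k] rho by (simp add: c_def)
  qed
  have c_lim: "c \<longlonglongrightarrow> 0" by (rule summable_LIMSEQ_zero[OF csum])
  have conv: "convergent (\<lambda>k. W k $ i $ j)" for i j
    by (rule conv_lemma[where g="\<lambda>k. 2 * c k"]) (rule Ediff, intro summable_mult csum)
  define Oinf where "Oinf = (\<chi> i j. lim (\<lambda>k. W k $ i $ j))"
  have ent: "(\<lambda>k. W k $ i $ j) \<longlonglongrightarrow> Oinf $ i $ j" for i j
    using conv[of i j] by (simp add: Oinf_def convergent_LIMSEQ_iff)
  have WL: "W \<longlonglongrightarrow> Oinf"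
    by (intro vec_tendstoI) (rule ent)
  have seqL: "(\<lambda>k. Omega_seq Om k) \<longlonglongrightarrow> Oinf"
  proof -
    have "(\<lambda>k. Omega_seq Om (Suc k)) = W"
      by (simp add: fun_eq_iff Omega_seq_def W_def F_def)
    then show ?thesis using WL filterlim_sequentially_Suc[of "Omega_seq Om"] by simp
  qed
  have z12: "blk12 Oinf = 0"
  proof -
    have "Oinf $ Inl a $ Inr b = 0" for a b
    proof -
      have "(\<lambda>k. W k $ Inl a $ Inr b) \<longlonglongrightarrow> 0"
        by (rule Lim_null_comparison[OF _ c_lim]) (use E12 in simp)
      then show ?thesis using ent[of "Inl a" "Inr b"] LIMSEQ_unique by blast
    qed
    then show ?thesis by (simp add: vec_eq_iff blk12_def)
  qed
  have z21: "blk21 Oinf = 0"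
  proof -
    have "Oinf $ Inr a $ Inl b = 0" for a b
    proof -
      have "(\<lambda>k. W k $ Inr a $ Inl b) \<longlonglongrightarrow> 0"
        by (rule Lim_null_comparison[OF _ c_lim]) (use E21 in simp)
      then show ?thesis using ent[of "Inr a" "Inl b"] LIMSEQ_unique by blast
    qed
    then show ?thesis by (simp add: vec_eq_iff blk21_def)
  qed
  have quadk: "\<rho> * (x \<bullet> x) \<le> x \<bullet> ((blk11 (W k) + blk22 (W k)) *v x)" for k x
  proof -
    have "m k * norm x ^ 2 \<le> x \<bullet> ((blk11 (W k) + blk22 (W k)) *v x)"
      using PK[of k] by (simp add: P_def)
    moreover have "\<rho> * (x \<bullet> x) \<le> m k * norm x ^ 2"
      using mge[of k] by (simp add: power2_norm_eq_inner mult_right_mono)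
    ultimately show ?thesis by linarith
  qed
  have psdinf: "psd_le (\<rho> *\<^sub>R mat 1) (blk11 Oinf + blk22 Oinf)"
  proof -
    have "\<rho> * (x \<bullet> x) \<le> x \<bullet> ((blk11 Oinf + blk22 Oinf) *v x)" for x
    proof (rule LIMSEQ_le_const)
      show "(\<lambda>k. x \<bullet> ((blk11 (W k) + blk22 (W k)) *v x)) \<longlonglongrightarrow> x \<bullet> ((blk11 Oinf + blk22 Oinf) *v x)"
        by (rule quad_cont) (simp add: blk11_def blk22_def, intro tendsto_add ent)
      show "\<exists>N. \<forall>n\<ge>N. \<rho> * (x \<bullet> x) \<le> x \<bullet> ((blk11 (W n) + blk22 (W n)) *v x)"
        using quadk by blast
    qed
    then show ?thesis by (simp add: psd_le_iff scal_mv)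
  qed
  have part1: "psd_le (\<rho> *\<^sub>R mat 1) (blk11 (Omega_seq Om k) + blk22 (Omega_seq Om k))" if "k > 0" for k
  proof -
    have "Omega_seq Om k = W (k - 1)" by (simp add: Omega_seq_def W_def F_def)
    then show ?thesis using quadk[where k="k - 1"] by (simp add: psd_le_iff scal_mv)
  qed
  show ?thesis using part1 z12 z21 psdinf seqL by blast
qed

end
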